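(* Let $n\ge3$, $\alpha\in(-\tfrac12,\infty)$, $p\in(1,\infty)$ with conjugate exponent $q=p/(p-1)$. Then $G_p$, defined on $[0,1)$, is (right-)differentiable at $r=0$ and $$G_p'(0)=C_{n,\alpha}(n+2\alpha)\left(\frac{\Gamma(\frac n2)\Gamma(\frac{1+q}{2})}{\sqrt\pi\,\Gamma(\frac{n+q}{2})}\right)^{1/q}.$$
   Context: $\mathbb{S}^{n-1}$ is the unit sphere of $\mathbb{R}^n$ with normalized surface measure $\sigma$, $e_n=(0,\dots,0,1)$, $C_{n,\alpha}=\frac{\Gamma(\frac n2+\alpha)\Gamma(1+\alpha)}{\Gamma(\frac n2)\Gamma(1+2\alpha)}$, $P_\alpha(x,\zeta)=C_{n,\alpha}\frac{(1-|x|^2)^{1+2\alpha}}{|x-\zeta|^{n+2\alpha}}$ for $|x|<1$, $\zeta\in\mathbb{S}^{n-1}$. For $r\in[0,1)$, $G_p(r)=\inf_{a\in[0,\infty)}\left(\int_{\mathbb{S}^{n-1}}|P_\alpha(re_n,\eta)-a|^q\,d\sigma(\eta)\right)^{1/q}$. *)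

theory Defs
  imports "HOL-Analysis.Analysis"
begin

text \<open>Normalized surface measure on the unit sphere of real^'n, realised as the
  cone measure: the push-forward of the uniform probability measure on the unit
  ball under radial projection x \<mapsto> x/|x|.\<close>
definition sphere_sigma :: "(real^'n::finite) measure" where
  "sphere_sigma = distr (uniform_measure lborel (ball 0 1)) borel (\<lambda>x. x /\<^sub>R norm x)"

definition C_const :: "real \<Rightarrow> real \<Rightarrow> real" where
  "C_const n \<alpha> = Gamma (n/2 + \<alpha>) * Gamma (1 + \<alpha>) / (Gamma (n/2) * Gamma (1 + 2*\<alpha>))"

definition P_kernel :: "real \<Rightarrow> real^'n::finite \<Rightarrow> real^'n \<Rightarrow> real" where
  "P_kernel \<alpha> x \<zeta> = C_const (real CARD('n)) \<alpha> * (1 - (norm x)\<^sup>2) powr (1 + 2*\<alpha>)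
     / (norm (x - \<zeta>)) powr (real CARD('n) + 2*\<alpha>)"

definition G_fun :: "real \<Rightarrow> real \<Rightarrow> real^'n::finite \<Rightarrow> real \<Rightarrow> real" where
  "G_fun \<alpha> p e r = (let q = p / (p - 1) in
     INF a\<in>{0::real..}. (integral\<^sup>L sphere_sigma (\<lambda>\<eta>. \<bar>P_kernel \<alpha> (r *\<^sub>R e) \<eta> - a\<bar> powr q)) powr (1/q))"

end

theory Submission
  imports Defs "HOL-Probability.Probability"
begin


lemma ball_meas_pos: "emeasure (lborel::(real^'n::finite) measure) (ball 0 1) \<noteq> 0"
  "emeasure (lborel::(real^'n::finite) measure) (ball 0 1) \<noteq> \<infinity>"
proof -
  have "unit_ball_vol (real CARD('n)) > 0" by (rule unit_ball_vol_pos) simp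
  then have "unit_ball_vol (real CARD('n)) \<noteq> 0" by linarith
  then show "emeasure (lborel::(real^'n::finite) measure) (ball 0 1) \<noteq> 0"
  "emeasure (lborel::(real^'n::finite) measure) (ball 0 1) \<noteq> \<infinity>"
    by (simp_all add: emeasure_ball)
qed

lemma measurable_sigma[simp]: "measurable (sphere_sigma :: (real^'n::finite) measure) N = measurable borel N"
  by (rule measurable_cong_sets) (simp_all add: sphere_sigma_def)

lemma proj_meas[measurable]: "(\<lambda>x::real^'n::finite. x /\<^sub>R norm x) \<in> borel_measurable borel"
  by measurable

lemma prob_space_sigma: "prob_space (sphere_sigma :: (real^'n::finite) measure)"
  unfolding sphere_sigma_def
  apply (rule prob_space.prob_space_distr)
  apply (rule prob_space_uniform_measure)
  using ball_meas_pos apply auto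
  done

lemma space_sigma[simp]: "space (sphere_sigma :: (real^'n::finite) measure) = UNIV"
  "sets (sphere_sigma :: (real^'n::finite) measure) = sets borel"
  by (simp_all add: sphere_sigma_def)

lemma AE_sphere: "AE \<eta> in (sphere_sigma :: (real^'n::finite) measure). norm \<eta> = 1"
proof -
  have "{0::real^'n} \<in> null_sets lborel" by (intro countable_imp_null_set_lborel) auto
  then have "AE x in lborel. x \<noteq> (0::real^'n)"
    by (intro AE_I[of _ _ "{0}"]) auto
  then have "AE x in uniform_measure lborel (ball (0::real^'n) 1). x \<noteq> 0"
    by (intro AE_uniform_measureI) auto
  then show ?thesis unfolding sphere_sigma_def
    by (subst AE_distr_iff) auto
qed

lemma sigma_uminus: "distr (sphere_sigma :: (real^'n::finite) measure) borel uminus = sphere_sigma"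
proof -
  let ?U = "uniform_measure lborel (ball (0::real^'n) 1)"
  have L: "distr lborel borel uminus = (lborel :: (real^'n) measure)"
    using lborel_affine[of "-1::real" "0::real^'n"] by (simp add: density_1)
  have U: "distr ?U borel uminus = ?U"
  proof (rule measure_eqI)
    fix A :: "(real^'n) set" assume A: "A \<in> sets (distr ?U borel uminus)"
    then have Ab: "A \<in> sets borel" by simp
    have um: "uminus -` A \<in> sets borel" using Ab by (rule measurable_sets_borel[rotated]) simp
    have "emeasure (distr ?U borel uminus) A = emeasure ?U (uminus -` A)"
      using Ab by (subst emeasure_distr) auto
    also have "\<dots> = emeasure lborel (uminus -` A \<inter> ball 0 1) / emeasure lborel (ball (0::real^'n) 1)"
      using Ab um by (subst emeasure_uniform_measure) (auto simp: Int_commute)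
    also have "uminus -` A \<inter> ball 0 1 = uminus -` (A \<inter> ball (0::real^'n) 1)"
      by auto
    also have "emeasure lborel \<dots> = emeasure (distr lborel borel uminus) (A \<inter> ball (0::real^'n) 1)"
      using Ab by (subst emeasure_distr) auto
    also have "\<dots> = emeasure lborel (A \<inter> ball (0::real^'n) 1)" by (simp add: L)
    also have "emeasure lborel (A \<inter> ball (0::real^'n) 1) / emeasure lborel (ball (0::real^'n) 1) = emeasure ?U A"
      using Ab by (subst emeasure_uniform_measure) (auto simp: Int_commute)
    finally show "emeasure (distr ?U borel uminus) A = emeasure ?U A" .
  qed simp
  have "distr (sphere_sigma :: (real^'n::finite) measure) borel uminus
        = distr ?U borel (uminus \<circ> (\<lambda>x. x /\<^sub>R norm x))"
    unfolding sphere_sigma_def by (subst distr_distr) auto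
  also have "uminus \<circ> (\<lambda>x::real^'n. x /\<^sub>R norm x) = (\<lambda>x. x /\<^sub>R norm x) \<circ> uminus"
    by (auto simp: fun_eq_iff)
  also have "distr ?U borel \<dots> = distr (distr ?U borel uminus) borel (\<lambda>x. x /\<^sub>R norm x)"
    by (subst distr_distr) auto
  also have "\<dots> = sphere_sigma" by (simp add: U sphere_sigma_def)
  finally show ?thesis .
qed

lemma integral_sigma_uminus:
  fixes f :: "real^'n::finite \<Rightarrow> real"
  assumes [measurable]: "f \<in> borel_measurable borel"
  shows "integral\<^sup>L sphere_sigma (\<lambda>\<eta>. f (-\<eta>)) = integral\<^sup>L sphere_sigma f"
proof -
  have "integral\<^sup>L sphere_sigma (\<lambda>\<eta>. f (-\<eta>)) = integral\<^sup>L (distr sphere_sigma borel uminus) f"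
    by (subst integral_distr) auto
  then show ?thesis by (simp add: sigma_uminus)
qed


lemma beta_aux_integral:
  fixes q :: real assumes q: "q > 0"
  shows "(\<integral>\<^sup>+x. indicator {-1..1} x * (\<bar>x\<bar> powr q * sqrt (1 - x\<^sup>2) ^ n) \<partial>lborel) =
      ennreal (Beta ((q+1)/2) (real n / 2 + 1))"
proof -
  have "((\<lambda>t. t powr ((q+1)/2 - 1) * (1 - t) powr (real n / 2 + 1 - 1)) has_integral
          Beta ((q+1)/2) (real n / 2 + 1)) {0..1}"
    using has_integral_Beta_real[of "(q+1)/2" "n / 2 + 1"] q by simp
  from nn_integral_has_integral_lebesgue[OF _ this] have
     "ennreal (Beta ((q+1)/2) (real n / 2 + 1)) =
        nn_integral lborel (\<lambda>t. ennreal (t powr ((q+1)/2 - 1) * (1 - t) powr (real n / 2) *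
                                indicator {0^2..1^2} t))"
    by (simp add: mult_ac ennreal_mult' ennreal_indicator)
  also have "\<dots> = (\<integral>\<^sup>+ x. ennreal (x\<^sup>2 powr ((q+1)/2 - 1) * (1 - x\<^sup>2) powr (real n / 2) * (2 * x) *
                          indicator {0..1} x) \<partial>lborel)"
    by (subst nn_integral_substitution[where g = "\<lambda>x. x ^ 2" and g' = "\<lambda>x. 2 * x"])
       (auto intro!: derivative_eq_intros continuous_intros simp: set_borel_measurable_def)
  also have "\<dots> = (\<integral>\<^sup>+ x. 2 * ennreal (\<bar>x\<bar> powr q * (1 - x\<^sup>2) powr (real n / 2) * indicator {0..1} x) \<partial>lborel)"
  proof -
  have AE0: "AE x in lborel. x \<noteq> (0::real)" by (intro AE_I[of _ _ "{0}"]) auto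
  show ?thesis
  using AE0 proof (intro nn_integral_cong_AE, eventually_elim)
    case (elim x)
    then have x: "x \<noteq> 0" by simp
    show "ennreal (x\<^sup>2 powr ((q+1)/2 - 1) * (1 - x\<^sup>2) powr (real n / 2) * (2 * x) * indicator {0..1} x) =
         2 * ennreal (\<bar>x\<bar> powr q * (1 - x\<^sup>2) powr (real n / 2) * indicator {0..1} x)"
    proof (cases "x \<in> {0..1}")
      case True
      then have xp: "x > 0" using x by auto
      have "x\<^sup>2 = x powr 2" using xp by (simp add: powr_realpow)
      then have "x\<^sup>2 powr ((q+1)/2 - 1) = (x powr 2) powr ((q+1)/2 - 1)" by simp
      also have "\<dots> = x powr (2 * ((q+1)/2 - 1))" by (simp add: powr_powr)
      also have "2 * ((q+1)/2 - 1) = q - 1" by (simp add: field_simps)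
      finally have "x\<^sup>2 powr ((q+1)/2 - 1) = x powr (q - 1)" .
      moreover have "x powr (q - 1) * x = x powr q"
        using xp powr_add[of x "q-1" 1] by simp
      ultimately have "x\<^sup>2 powr ((q+1)/2 - 1) * x = x powr q" by simp
      then have e2: "x\<^sup>2 powr ((q+1)/2 - 1) * (1 - x\<^sup>2) powr (real n / 2) * (2 * x)
          = 2 * (x powr q * (1 - x\<^sup>2) powr (real n / 2))"
        by (metis (no_types, lifting) mult.assoc mult.commute)
      have "ennreal (2 * (x powr q * (1 - x\<^sup>2) powr (real n / 2))) = 2 * ennreal (x powr q * (1 - x\<^sup>2) powr (real n / 2))"
        by (simp add: ennreal_mult)
      have i1: "indicator {0..1} x = (1::real)" using True by simp
      have ax: "\<bar>x\<bar> = x" using xp by simp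
      show ?thesis unfolding i1 mult_1_right e2 ax by fact
    qed simp
  qed
  qed
  also have "\<dots> = (\<integral>\<^sup>+ x. ennreal (\<bar>x\<bar> powr q * (1 - x\<^sup>2) powr (real n / 2) * indicator {0..1} x) \<partial>lborel) +
                    (\<integral>\<^sup>+ x. ennreal (\<bar>x\<bar> powr q * (1 - x\<^sup>2) powr (real n / 2) * indicator {0..1} x) \<partial>lborel)"
    (is "_ = ?I + _") by (simp add: mult_2 nn_integral_add)
  also have "?I = (\<integral>\<^sup>+ x. ennreal (\<bar>x\<bar> powr q * (1 - x\<^sup>2) powr (real n / 2) * indicator {-1..0} x) \<partial>lborel)"
    by (subst nn_integral_real_affine[of _ "-1" 0])
       (auto simp: indicator_def intro!: nn_integral_cong)
  hence "?I + ?I = \<dots> + ?I" by simp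
  also have "\<dots> = (\<integral>\<^sup>+ x. ennreal (\<bar>x\<bar> powr q * (1 - x\<^sup>2) powr (real n / 2) *
                    (indicator {-1..0} x + indicator{0..1} x)) \<partial>lborel)"
    by (subst nn_integral_add [symmetric]) (auto simp: algebra_simps)
  also have "\<dots> = (\<integral>\<^sup>+ x. ennreal (\<bar>x\<bar> powr q * (1 - x\<^sup>2) powr (real n / 2) * indicator {-1..1} x) \<partial>lborel)"
    by (intro nn_integral_cong_AE AE_I[of _ _ "{0}"]) (auto simp: indicator_def)
  also have "\<dots> = (\<integral>\<^sup>+ x. ennreal (indicator {-1..1} x * (\<bar>x\<bar> powr q * sqrt (1 - x\<^sup>2) ^ n)) \<partial>lborel)"
    by (intro nn_integral_cong_AE AE_I[of _ _ "{1, -1}"])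
       (auto simp: powr_half_sqrt [symmetric] indicator_def abs_square_le_1
          abs_square_eq_1 powr_def exp_of_nat_mult [symmetric] emeasure_lborel_countable)
  finally show ?thesis by (simp add: ennreal_mult' ennreal_indicator)
qed


lemma vec_nth_measurable[measurable]: "(\<lambda>x::real^'n::finite. x$i) \<in> borel_measurable borel"
  unfolding cart_eq_inner_axis by measurable

lemma cball_borel[measurable]: "cball (c::'a::euclidean_space) r \<in> sets borel"
  by (simp add: borel_closed)
lemma ball_borel[measurable]: "ball (c::'a::euclidean_space) r \<in> sets borel"
  by (simp add: borel_open)

lemma sum_basis_inner:
  fixes f :: "'a::euclidean_space \<Rightarrow> real"
  assumes "c \<in> Basis"
  shows "(\<Sum>b\<in>Basis. f b *\<^sub>R b) \<bullet> c = f c"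
  using assms by (simp add: inner_sum_left inner_Basis if_distrib sum.delta cong: if_cong)

lemma sum_basis_norm:
  fixes f :: "'a::euclidean_space \<Rightarrow> real"
  shows "norm (\<Sum>b\<in>Basis. f b *\<^sub>R b :: 'a) = sqrt (\<Sum>b\<in>Basis. (f b)\<^sup>2)"
proof -
  have "norm (\<Sum>b\<in>Basis. f b *\<^sub>R b :: 'a) = dist 0 (\<Sum>b\<in>Basis. f b *\<^sub>R b :: 'a)" by simp
  also have "\<dots> = sqrt (\<Sum>b\<in>Basis. (f b)\<^sup>2)"
    by (subst euclidean_dist_l2) (auto simp: L2_set_def sum_basis_inner intro!: sum.cong)
  finally show ?thesis .
qed

lemma slice_integral:
  fixes i :: "'n::finite" and q :: real
  assumes q: "q > 0"
  shows "(\<integral>\<^sup>+x. indicator (cball 0 1) x * ennreal (\<bar>x$i\<bar> powr q) \<partial>(lborel::(real^'n) measure)) =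
     ennreal (unit_ball_vol (real (CARD('n) - 1)) * Beta ((q+1)/2) (real (CARD('n) - 1) / 2 + 1))"
proof -
  define e :: "real^'n" where "e = axis i 1"
  define A where "A = (Basis :: (real^'n) set) - {e}"
  have eB: "e \<in> Basis" unfolding e_def by (simp add: Basis_vec_def) blast
  have BA: "Basis = insert e A" "e \<notin> A" "finite A" using eB by (auto simp: A_def)
  have cardA: "card A = CARD('n) - 1" using eB by (simp add: A_def card_Diff_singleton)
  interpret product_sigma_finite "\<lambda>_. lborel :: real measure" by standard
  let ?S = "\<lambda>f. (\<Sum>b\<in>Basis. f b *\<^sub>R b :: real^'n)"
  have "(\<integral>\<^sup>+x. indicator (cball 0 1) x * ennreal (\<bar>x$i\<bar> powr q) \<partial>(lborel::(real^'n) measure))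
      = (\<integral>\<^sup>+x. indicator (cball 0 1) x * ennreal (\<bar>x$i\<bar> powr q) \<partial>(distr (Pi\<^sub>M Basis (\<lambda>_. lborel)) borel ?S))"
    by (simp only: lborel_eq[symmetric])
  also have "\<dots> = (\<integral>\<^sup>+f. indicator (cball 0 1) (?S f) * ennreal (\<bar>(?S f)$i\<bar> powr q) \<partial>(Pi\<^sub>M Basis (\<lambda>_. lborel)))"
  proof -
    have m1: "?S \<in> measurable (Pi\<^sub>M Basis (\<lambda>_. lborel)) borel" by measurable
    have m2: "(\<lambda>x::real^'n. indicator (cball 0 1) x * ennreal (\<bar>x$i\<bar> powr q)) \<in> borel_measurable borel" by measurable
    show ?thesis using m2 by (subst nn_integral_distr[OF m1]) (simp_all add: measurable_distr_eq1)
  qed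
  also have "\<dots> = (\<integral>\<^sup>+f. indicator {f. sqrt (\<Sum>b\<in>Basis. (f b)\<^sup>2) \<le> 1} f * ennreal (\<bar>f e\<bar> powr q) \<partial>(Pi\<^sub>M Basis (\<lambda>_. lborel)))"
    by (intro nn_integral_cong) (simp add:  indicator_def sum_basis_norm cart_eq_inner_axis[of _ i] e_def[symmetric] sum_basis_inner eB)
  also have "\<dots> = (\<integral>\<^sup>+ y. \<integral>\<^sup>+ x. indicator {f. sqrt (\<Sum>b\<in>insert e A. (f b)\<^sup>2) \<le> 1} (x(e:=y)) * ennreal (\<bar>(x(e:=y)) e\<bar> powr q)
           \<partial>Pi\<^sub>M A (\<lambda>_. lborel) \<partial>lborel)"
  proof -
    have mm: "(\<lambda>f. indicator {f. sqrt (\<Sum>b\<in>insert e A. (f b)\<^sup>2) \<le> 1} f * ennreal (\<bar>f e\<bar> powr q))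
       \<in> borel_measurable (Pi\<^sub>M (insert e A) (\<lambda>_. lborel))"
      by measurable
    show ?thesis unfolding BA(1)
      by (rule product_nn_integral_insert_rev[OF BA(3) BA(2) mm])
  qed
  also have "\<dots> = (\<integral>\<^sup>+ y. \<integral>\<^sup>+ x. ennreal (\<bar>y\<bar> powr q) * indicator {-1..1} y *
        indicator ({f. sqrt (\<Sum>b\<in>A. (f b)\<^sup>2) \<le> sqrt (1 - y\<^sup>2)} \<inter> space (Pi\<^sub>M A (\<lambda>_. lborel))) x
           \<partial>Pi\<^sub>M A (\<lambda>_. lborel) \<partial>lborel)"
  proof (intro nn_integral_cong, goal_cases)
    case (1 y x)
    have sA: "(\<Sum>b\<in>A. ((x(e:=y)) b)\<^sup>2) = (\<Sum>b\<in>A. (x b)\<^sup>2)"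
      using BA by (intro sum.cong) auto
    have nn: "0 \<le> (\<Sum>b\<in>A. (x b)\<^sup>2)" by (simp add: sum_nonneg)
    have "(sqrt (y\<^sup>2 + (\<Sum>b\<in>A. (x b)\<^sup>2)) \<le> 1) \<longleftrightarrow> (y \<in> {-1..1} \<and> sqrt (\<Sum>b\<in>A. (x b)\<^sup>2) \<le> sqrt (1 - y\<^sup>2))"
    proof -
      define s where "s = (\<Sum>b\<in>A. (x b)\<^sup>2)"
      have s0: "s \<ge> 0" using nn s_def by simp
      have a: "(sqrt (y\<^sup>2 + s) \<le> 1) \<longleftrightarrow> y\<^sup>2 + s \<le> 1" by simp
      have b: "(sqrt s \<le> sqrt (1 - y\<^sup>2)) \<longleftrightarrow> s \<le> 1 - y\<^sup>2" by simp
      have c: "(y \<in> {-1..1}) \<longleftrightarrow> y\<^sup>2 \<le> 1" using abs_square_le_1[of y] by (auto simp: abs_le_iff)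
      show ?thesis unfolding s_def[symmetric] a b c using s0 by linarith
    qed
    moreover have "(\<Sum>b\<in>insert e A. ((x(e:=y)) b)\<^sup>2) = y\<^sup>2 + (\<Sum>b\<in>A. (x b)\<^sup>2)"
      using BA sA by (subst sum.insert) auto
    ultimately have eq: "x(e:=y) \<in> {f. sqrt (\<Sum>b\<in>insert e A. (f b)\<^sup>2) \<le> 1} \<longleftrightarrow>
       (y \<in> {-1..1} \<and> x \<in> {f. sqrt (\<Sum>b\<in>A. (f b)\<^sup>2) \<le> sqrt (1 - y\<^sup>2)} \<inter> space (Pi\<^sub>M A (\<lambda>_. lborel)))"
      using 1 by auto
    show ?case unfolding indicator_def eq by simp
  qed
  also have "\<dots> = (\<integral>\<^sup>+ y. ennreal (\<bar>y\<bar> powr q) * indicator {-1..1} y *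
        emeasure (Pi\<^sub>M A (\<lambda>_. lborel)) ({f. sqrt (\<Sum>b\<in>A. (f b)\<^sup>2) \<le> sqrt (1 - y\<^sup>2)} \<inter> space (Pi\<^sub>M A (\<lambda>_. lborel))) \<partial>lborel)"
    using BA by (intro nn_integral_cong) (subst nn_integral_cmult; simp)
  also have "\<dots> = (\<integral>\<^sup>+ y. ennreal (unit_ball_vol (real (card A))) * (indicator {-1..1} y * ennreal (\<bar>y\<bar> powr q * sqrt (1 - y\<^sup>2) ^ card A)) \<partial>lborel)"
  proof (intro nn_integral_cong_AE, goal_cases)
    case 1
    have "AE y in lborel. y \<notin> {-1,1::real}"
      by (intro AE_not_in countable_imp_null_set_lborel) auto
    thus ?case
    proof eventually_elim
      case (elim y)
      show ?case
      proof (cases "y \<in> {-1<..<1}")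
        case True
        hence "y\<^sup>2 < 1" by (auto simp: abs_square_less_1)
        thus ?thesis using BA
          by (subst emeasure_cball_aux) (auto simp: ennreal_mult' mult_ac)
      qed (insert elim, auto)
    qed
  qed
  also have "\<dots> = ennreal (unit_ball_vol (real (card A))) * (\<integral>\<^sup>+ y. indicator {-1..1} y * ennreal (\<bar>y\<bar> powr q * sqrt (1 - y\<^sup>2) ^ card A) \<partial>lborel)"
    by (subst nn_integral_cmult) auto
  also have "(\<integral>\<^sup>+ y. indicator {-1..1} y * ennreal (\<bar>y\<bar> powr q * sqrt (1 - y\<^sup>2) ^ card A) \<partial>lborel)
     = ennreal (Beta ((q+1)/2) (real (card A) / 2 + 1))"
    using beta_aux_integral[OF q, of "card A"] by (simp add: ennreal_mult' ennreal_indicator)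
  finally show ?thesis using cardA by (simp add: ennreal_mult')
qed


definition hh :: "'n::finite \<Rightarrow> real \<Rightarrow> real^'n \<Rightarrow> real" where
  "hh i q x = \<bar>x$i\<bar> powr q / norm x powr q"

lemma hh_measurable[measurable]: "hh i q \<in> borel_measurable borel"
  unfolding hh_def by measurable

lemma hh_nonneg: "hh i q x \<ge> 0" by (simp add: hh_def)

lemma hh_le1: "q \<ge> 0 \<Longrightarrow> hh i q x \<le> 1"
proof -
  assume q: "q \<ge> 0"
  have "\<bar>x$i\<bar> \<le> norm x" by (rule component_le_norm_cart)
  then have "\<bar>x$i\<bar> powr q \<le> norm x powr q" using q by (intro powr_mono2) auto
  then show ?thesis unfolding hh_def by (cases "norm x powr q = 0") (auto simp: divide_le_eq_1)
qed

lemma hh_scale: "s > 0 \<Longrightarrow> hh i q (s *\<^sub>R x) = hh i q x"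
proof -
  assume s: "s > 0"
  have "\<bar>(s *\<^sub>R x)$i\<bar> powr q = s powr q * \<bar>x$i\<bar> powr q"
    using s by (simp add: abs_mult powr_mult)
  moreover have "norm (s *\<^sub>R x) powr q = s powr q * norm x powr q"
    using s by (simp add: powr_mult)
  ultimately show ?thesis unfolding hh_def using s by simp
qed

lemma hh_scaling:
  fixes s :: real and i :: "'n::finite"
  assumes s: "s > 0"
  shows "(\<integral>\<^sup>+x. indicator (ball 0 s) x * ennreal (hh i q x) \<partial>(lborel::(real^'n) measure)) =
    ennreal (s ^ CARD('n)) * (\<integral>\<^sup>+x. indicator (ball 0 1) x * ennreal (hh i q x) \<partial>lborel)"
proof -
  let ?f = "\<lambda>x::real^'n. indicator (ball 0 s) x * ennreal (hh i q x)"
  have L: "(lborel::(real^'n) measure) = density (distr lborel borel (\<lambda>x. 0 + s *\<^sub>R x)) (\<lambda>_. \<bar>s\<bar> ^ DIM(real^'n))"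
    by (rule lborel_affine) (use s in simp)
  have "integral\<^sup>N lborel ?f = integral\<^sup>N (density (distr lborel borel (\<lambda>x. 0 + s *\<^sub>R x)) (\<lambda>_. \<bar>s\<bar> ^ DIM(real^'n))) ?f"
    by (rule arg_cong[OF L])
  also have "\<dots> = (\<integral>\<^sup>+x. ennreal (\<bar>s\<bar> ^ DIM(real^'n)) * ?f x \<partial>(distr lborel borel (\<lambda>x. 0 + s *\<^sub>R x)))"
    by (subst nn_integral_density) auto
  also have "\<dots> = (\<integral>\<^sup>+x. ennreal (\<bar>s\<bar> ^ DIM(real^'n)) * ?f (0 + s *\<^sub>R x) \<partial>lborel)"
    by (subst nn_integral_distr) auto
  also have "\<dots> = (\<integral>\<^sup>+x. ennreal (s ^ CARD('n)) * (indicator (ball 0 1) x * ennreal (hh i q x)) \<partial>lborel)"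
  proof (intro nn_integral_cong)
    fix x :: "real^'n"
    have "(s *\<^sub>R x \<in> ball 0 s) \<longleftrightarrow> x \<in> ball 0 1" using s by simp
    then show "ennreal (\<bar>s\<bar> ^ DIM(real^'n)) * ?f (0 + s *\<^sub>R x) = ennreal (s ^ CARD('n)) * (indicator (ball 0 1) x * ennreal (hh i q x))"
      using s by (simp add: hh_scale indicator_def)
  qed
  also have "\<dots> = ennreal (s ^ CARD('n)) * (\<integral>\<^sup>+x. indicator (ball 0 1) x * ennreal (hh i q x) \<partial>lborel)"
    by (subst nn_integral_cmult) auto
  finally show ?thesis .
qed


lemma powr_less_iff_aux:
  fixes a t q :: real assumes q: "q > 0" and a: "a \<ge> 0" and t: "t \<ge> 0"
  shows "a < t powr (1/q) \<longleftrightarrow> a powr q < t"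
proof
  assume "a < t powr (1/q)"
  then have "a powr q < (t powr (1/q)) powr q" using q a by (intro powr_less_mono2) auto
  also have "\<dots> = t" using q t by (simp add: powr_powr)
  finally show "a powr q < t" .
next
  assume "a powr q < t"
  then have "(a powr q) powr (1/q) < t powr (1/q)" using q a by (intro powr_less_mono2) auto
  also have "(a powr q) powr (1/q) = a" using q a by (simp add: powr_powr)
  finally show "a < t powr (1/q)" .
qed

lemma layer_cake:
  fixes i :: "'n::finite" and q :: real
  assumes q: "q > 0"
  shows "(\<integral>\<^sup>+x. indicator (ball 0 1) x * ennreal ((1 - norm x powr q) * hh i q x) \<partial>(lborel::(real^'n) measure))
    = ennreal (q / (real CARD('n) + q)) * (\<integral>\<^sup>+x. indicator (ball 0 1) x * ennreal (hh i q x) \<partial>lborel)"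
proof -
  define K where "K = (\<integral>\<^sup>+x. indicator (ball 0 1) x * ennreal (hh i q x) \<partial>(lborel::(real^'n) measure))"
  define F where "F = (\<lambda>(x::real^'n) (t::real). indicator {0..1} t * indicator {p::(real^'n) \<times> real. norm (fst p) < snd p powr (1/q)} (x,t) * ennreal (hh i q x))"
  have Fm: "case_prod F \<in> borel_measurable (lborel \<Otimes>\<^sub>M lborel)"
    unfolding F_def by measurable
  have pt: "indicator (ball 0 1) x * ennreal ((1 - norm x powr q) * hh i q x) = (\<integral>\<^sup>+t. F x t \<partial>lborel)" for x :: "real^'n"
  proof -
    have "(\<integral>\<^sup>+t. F x t \<partial>lborel) = (\<integral>\<^sup>+t. ennreal (hh i q x) * indicator {norm x powr q <.. 1} t \<partial>lborel)"
    proof (intro nn_integral_cong)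
      fix t :: real
      show "F x t = ennreal (hh i q x) * indicator {norm x powr q <.. 1} t"
      proof (cases "t \<in> {0..1}")
        case True
        then have "norm x < t powr (1/q) \<longleftrightarrow> norm x powr q < t"
          using q by (intro powr_less_iff_aux) auto
        then show ?thesis using True by (auto simp: F_def indicator_def)
      next
        case False
        have "norm x powr q \<ge> 0" by simp
        then have "t \<notin> {norm x powr q <.. 1}" using False by (auto simp del: powr_ge_zero)
        then show ?thesis using False by (simp add: F_def)
      qed
    qed
    also have "\<dots> = ennreal (hh i q x) * emeasure lborel {norm x powr q <.. 1}"
      by (subst nn_integral_cmult_indicator) auto
    also have "\<dots> = indicator (ball 0 1) x * ennreal ((1 - norm x powr q) * hh i q x)"
    proof (cases "x \<in> ball 0 1")
      case True
      then have "norm x powr q \<le> 1" using q by (simp add: powr_le1)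
      then show ?thesis using True by (simp add: ennreal_mult' hh_nonneg mult.commute)
    next
      case False
      then have "norm x \<ge> 1" by simp
      then have "norm x powr q \<ge> 1" using q by (simp add: ge_one_powr_ge_zero)
      then show ?thesis using False by simp
    qed
    finally show ?thesis by simp
  qed
  have "(\<integral>\<^sup>+x. indicator (ball 0 1) x * ennreal ((1 - norm x powr q) * hh i q x) \<partial>(lborel::(real^'n) measure))
      = (\<integral>\<^sup>+x. \<integral>\<^sup>+t. F x t \<partial>lborel \<partial>lborel)"
    by (simp add: pt)
  also have "\<dots> = (\<integral>\<^sup>+t. \<integral>\<^sup>+x. F x t \<partial>lborel \<partial>lborel)"
    by (rule lborel_pair.Fubini'[symmetric, OF Fm])
  also have "\<dots> = (\<integral>\<^sup>+t. K * (ennreal (t powr (real CARD('n) / q)) * indicator {0..1} t) \<partial>lborel)"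
  proof (intro nn_integral_cong_AE)
    have "AE t in lborel. t \<noteq> (0::real)" by (intro AE_I[of _ _ "{0}"]) auto
    then show "AE t in lborel. (\<integral>\<^sup>+x. F x t \<partial>lborel) = K * (ennreal (t powr (real CARD('n) / q)) * indicator {0..1} t)"
    proof eventually_elim
      case (elim t)
      show ?case
      proof (cases "t \<in> {0..1}")
        case True
        then have tp: "t > 0" using elim by auto
        have "(\<integral>\<^sup>+x. F x t \<partial>lborel) = (\<integral>\<^sup>+x. indicator (ball 0 (t powr (1/q))) x * ennreal (hh i q x) \<partial>lborel)"
          using True by (intro nn_integral_cong) (simp add: F_def indicator_def)
        also have "\<dots> = ennreal ((t powr (1/q)) ^ CARD('n)) * K"
          unfolding K_def using tp by (intro hh_scaling) simp
        also have "(t powr (1/q)) ^ CARD('n) = t powr (real CARD('n) / q)"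
          using tp by (simp add: powr_realpow [symmetric] powr_powr)
        finally show ?thesis using True by (simp add: mult.commute)
      next
        case False
        then show ?thesis by (simp add: F_def)
      qed
    qed
  qed
  also have "\<dots> = K * (\<integral>\<^sup>+t. ennreal (t powr (real CARD('n) / q)) * indicator {0..1} t \<partial>lborel)"
    by (subst nn_integral_cmult) auto
  also have "(\<integral>\<^sup>+t. ennreal (t powr (real CARD('n) / q)) * indicator {0..1} t \<partial>lborel) = ennreal (q / (real CARD('n) + q))"
  proof -
    have "((\<lambda>t. t powr (real CARD('n) / q)) has_integral (1 powr (real CARD('n) / q + 1) / (real CARD('n) / q + 1))) {0..1}"
    proof (intro has_integral_powr_from_0)
      have "real CARD('n) / q \<ge> 0" using q by simp
      then show "real CARD('n) / q > -1" by linarith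
    qed auto
    from nn_integral_has_integral_lebesgue'[OF _ this]
    have "(\<integral>\<^sup>+t. ennreal (t powr (real CARD('n) / q)) * indicator {0..1} t \<partial>lborel) = ennreal (1 / (real CARD('n) / q + 1))"
      by simp
    also have "1 / (real CARD('n) / q + 1) = q / (real CARD('n) + q)"
      using q by (simp add: field_simps)
    finally show ?thesis .
  qed
  finally show ?thesis unfolding K_def by (simp add: mult.commute)
qed


lemma field_aux:
  fixes P S d c a n m b :: real
  assumes "P > 0" "S > 0" "d > 0" "c > 0" "a > 0" "n > 0" "m > 0"
  shows "(P/S/d) * (b*d/(m/2*c)) * (m/n) / (P/(n/2*a)) = a*b/(S*c)"
  using assms by (simp add: field_simps)

lemma gamma_algebra:
  fixes n q :: real assumes n: "n \<ge> 1" and q: "q > 0"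
  shows "unit_ball_vol (n - 1) * Beta ((q+1)/2) ((n - 1) / 2 + 1) * ((n + q) / n) / unit_ball_vol n
     = Gamma (n/2) * Gamma ((1+q)/2) / (sqrt pi * Gamma ((n+q)/2))"
proof -
  have g1: "Gamma ((n+q)/2 + 1) = (n+q)/2 * Gamma ((n+q)/2)"
    using Gamma_plus1[of "(n+q)/2"] nonpos_Ints_nonpos[of "(n+q)/2"] n q by force
  have g2: "Gamma (n/2 + 1) = n/2 * Gamma (n/2)"
    using Gamma_plus1[of "n/2"] nonpos_Ints_nonpos[of "n/2"] n by force
  have e1: "(q+1)/2 + ((n - 1) / 2 + 1) = (n+q)/2 + 1" by (simp add: field_simps)
  have e2: "(n - 1) / 2 + 1 = (n+1)/2" by (simp add: field_simps)
  have pp: "pi powr ((n - 1) / 2) = pi powr (n/2) / sqrt pi"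
  proof -
    have "pi powr ((n - 1) / 2) = pi powr (n/2 - 1/2)" by (simp add: field_simps)
    also have "\<dots> = pi powr (n/2) / pi powr (1/2)" by (simp add: powr_diff)
    finally show ?thesis by (simp add: powr_half_sqrt)
  qed
  have G1: "Gamma ((n+q)/2) > 0" using n q by (intro Gamma_real_pos) auto
  have G2: "Gamma (n/2) > 0" using n by (intro Gamma_real_pos) auto
  have G3: "Gamma ((n+1)/2) > 0" using n by (intro Gamma_real_pos) auto
  have P: "pi powr (n/2) > 0" by simp
  have U1: "unit_ball_vol (n - 1) = pi powr (n/2) / sqrt pi / Gamma ((n+1)/2)"
    unfolding unit_ball_vol_def pp e2 by simp
  have U2: "unit_ball_vol n = pi powr (n/2) / (n/2 * Gamma (n/2))"
    unfolding unit_ball_vol_def g2 by simp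
  have B: "Beta ((q+1)/2) ((n - 1) / 2 + 1) = Gamma ((q+1)/2) * Gamma ((n+1)/2) / ((n+q)/2 * Gamma ((n+q)/2))"
    unfolding Beta_def e1 g1 by (simp add: e2)
  show ?thesis unfolding U1 U2 B
    using field_aux[OF P _ G3 G1 G2, of "sqrt pi" n "n+q" "Gamma ((q+1)/2)"] n q by (simp add: add.commute)
qed

lemma proj_hh: "\<bar>(x /\<^sub>R norm x)$i\<bar> powr q = hh i q x"
proof -
  have "(x /\<^sub>R norm x)$i = x$i / norm x" by (simp add: divide_inverse mult.commute)
  then have "\<bar>(x /\<^sub>R norm x)$i\<bar> = \<bar>x$i\<bar> / norm x" by simp
  then show ?thesis unfolding hh_def by (simp add: powr_divide)
qed

lemma moment_nn:
  fixes i :: "'n::finite" and q :: real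
  assumes q: "q > 0"
  defines "n \<equiv> real CARD('n)"
  shows "(\<integral>\<^sup>+\<eta>. ennreal (\<bar>\<eta>$i\<bar> powr q) \<partial>(sphere_sigma::(real^'n) measure))
     = ennreal (Gamma (n/2) * Gamma ((1+q)/2) / (sqrt pi * Gamma ((n+q)/2)))"
proof -
  let ?B = "ball (0::real^'n) 1"
  define V where "V = unit_ball_vol n"
  have V: "V > 0" unfolding V_def n_def by (rule unit_ball_vol_pos) simp
  have n1: "n \<ge> 1" unfolding n_def by simp
  define W where "W = unit_ball_vol (real (CARD('n) - 1)) * Beta ((q+1)/2) (real (CARD('n) - 1) / 2 + 1)"
  have nm1: "real (CARD('n) - 1) = n - 1" unfolding n_def by (simp add: of_nat_diff)
  define K where "K = (\<integral>\<^sup>+x. indicator ?B x * ennreal (hh i q x) \<partial>lborel)"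
  have sph: "sphere (0::real^'n) 1 \<in> null_sets lborel"
    using negligible_sphere[of "0::real^'n" 1]
    by (auto simp: null_sets_completion_iff negligible_iff_null_sets negligible_convex_frontier)
  have I1: "(\<integral>\<^sup>+x. indicator ?B x * ennreal (\<bar>x$i\<bar> powr q) \<partial>lborel) = ennreal W"
  proof -
    have "AE x in lborel. x \<notin> sphere (0::real^'n) 1"
      using sph by (rule AE_not_in)
    then have "(\<integral>\<^sup>+x. indicator ?B x * ennreal (\<bar>x$i\<bar> powr q) \<partial>lborel)
        = (\<integral>\<^sup>+x. indicator (cball 0 1) x * ennreal (\<bar>x$i\<bar> powr q) \<partial>lborel)"
      by (intro nn_integral_cong_AE) (auto elim!: eventually_mono simp: indicator_def)
    also have "\<dots> = ennreal W" unfolding W_def by (rule slice_integral[OF q])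
    finally show ?thesis .
  qed
  have I2: "(\<integral>\<^sup>+x. indicator ?B x * ennreal (norm x powr q * hh i q x) \<partial>lborel) = ennreal W"
  proof -
    have "norm x powr q * hh i q x = \<bar>x$i\<bar> powr q" for x :: "real^'n"
    proof (cases "x = 0")
      case True then show ?thesis by (simp add: hh_def)
    next
      case False then show ?thesis by (simp add: hh_def)
    qed
    then show ?thesis using I1 by simp
  qed
  have sumK: "ennreal W + ennreal (q / (n + q)) * K = K"
  proof -
    have "ennreal W + ennreal (q / (n + q)) * K =
      (\<integral>\<^sup>+x. indicator ?B x * ennreal (norm x powr q * hh i q x) \<partial>lborel) +
      (\<integral>\<^sup>+x. indicator ?B x * ennreal ((1 - norm x powr q) * hh i q x) \<partial>lborel)"
      unfolding I2 K_def n_def using layer_cake[OF q, of i] by simp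
    also have "\<dots> = (\<integral>\<^sup>+x. indicator ?B x * ennreal (norm x powr q * hh i q x) + indicator ?B x * ennreal ((1 - norm x powr q) * hh i q x) \<partial>lborel)"
      by (rule nn_integral_add[symmetric]) auto
    also have "\<dots> = K" unfolding K_def
    proof (intro nn_integral_cong)
      fix x :: "real^'n"
      show "indicator ?B x * ennreal (norm x powr q * hh i q x) + indicator ?B x * ennreal ((1 - norm x powr q) * hh i q x)
         = indicator ?B x * ennreal (hh i q x)"
      proof (cases "x \<in> ?B")
        case True
        then have "norm x powr q \<le> 1" using q by (simp add: powr_le1)
        then have "ennreal (norm x powr q * hh i q x) + ennreal ((1 - norm x powr q) * hh i q x) = ennreal (hh i q x)"
          by (subst ennreal_plus[symmetric]) (auto simp: hh_nonneg algebra_simps intro: mult_left_le)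
        then show ?thesis using True by simp
      qed simp
    qed
    finally show ?thesis .
  qed
  have Kfin: "K \<le> ennreal V"
  proof -
    have "K \<le> (\<integral>\<^sup>+x. indicator ?B x \<partial>lborel)"
      unfolding K_def by (intro nn_integral_mono) (auto simp: indicator_def hh_le1 q less_imp_le)
    also have "\<dots> = emeasure lborel ?B" by simp
    also have "\<dots> = ennreal V" unfolding V_def n_def by (simp add: emeasure_ball)
    finally show ?thesis .
  qed
  have "K < top" using Kfin ennreal_less_top[of V] by (rule le_less_trans)
  then obtain k where k: "K = ennreal k" "k \<ge> 0" by (auto simp: less_top_ennreal)
  have Wn: "W \<ge> 0"
  proof -
    have "Beta ((q+1)/2) (real (CARD('n) - 1) / 2 + 1) > 0"
      unfolding Beta_def using q n1 unfolding nm1 by (intro divide_pos_pos mult_pos_pos Gamma_real_pos) (auto simp: field_simps)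
    then show ?thesis unfolding W_def by simp
  qed
  have "W + q / (n+q) * k = k"
    using sumK k q n1 Wn by (simp add: ennreal_mult'[symmetric] ennreal_plus[symmetric] del: ennreal_plus)
  then have kW: "k = W * ((n + q) / n)" using q n1 by (simp add: field_simps)
  have "(\<integral>\<^sup>+\<eta>. ennreal (\<bar>\<eta>$i\<bar> powr q) \<partial>(sphere_sigma::(real^'n) measure))
      = (\<integral>\<^sup>+x. ennreal (\<bar>(x /\<^sub>R norm x)$i\<bar> powr q) \<partial>uniform_measure lborel ?B)"
    unfolding sphere_sigma_def by (subst nn_integral_distr) auto
  also have "\<dots> = (\<integral>\<^sup>+x. ennreal (hh i q x) * indicator ?B x \<partial>lborel) / emeasure lborel ?B"
    unfolding proj_hh by (subst nn_integral_uniform_measure) auto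
  also have "\<dots> = K / ennreal V"
    unfolding K_def V_def n_def by (simp add: emeasure_ball mult.commute)
  also have "\<dots> = ennreal (k / V)" using k V by (simp add: divide_ennreal)
  also have "k / V = Gamma (n/2) * Gamma ((1+q)/2) / (sqrt pi * Gamma ((n+q)/2))"
    unfolding kW V_def W_def nm1 using gamma_algebra[OF n1 q] by simp
  finally show ?thesis .
qed


definition phi :: "real \<Rightarrow> real \<Rightarrow> real \<Rightarrow> real \<Rightarrow> real" where
  "phi \<gamma> \<beta> r t = (1 - r\<^sup>2) powr \<gamma> * (1 - 2*r*t + r\<^sup>2) powr (-\<beta>)"

definition psi :: "real \<Rightarrow> real \<Rightarrow> real \<Rightarrow> real \<Rightarrow> real" where
  "psi \<gamma> \<beta> r t = (\<gamma> * (1 - r\<^sup>2) powr (\<gamma> - 1) * (- 2 * r)) * (1 - 2*r*t + r\<^sup>2) powr (-\<beta>)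
     + (1 - r\<^sup>2) powr \<gamma> * ((-\<beta>) * (1 - 2*r*t + r\<^sup>2) powr (-\<beta> - 1) * (2*r - 2*t))"

lemma base_pos: "\<bar>r\<bar> < 1 \<Longrightarrow> \<bar>t\<bar> \<le> 1 \<Longrightarrow> 1 - 2*r*t + r\<^sup>2 > (0::real)"
proof -
  assume r: "\<bar>r\<bar> < 1" and t: "\<bar>t\<bar> \<le> 1"
  have "\<bar>r*t\<bar> \<le> \<bar>r\<bar>" using t by (simp add: abs_mult mult_left_le)
  then have a: "r*t \<le> \<bar>r\<bar>" by linarith
  have "(1 - \<bar>r\<bar>)\<^sup>2 > 0" using r by simp
  then have "1 - 2*\<bar>r\<bar> + r\<^sup>2 > 0" by (simp add: power2_eq_square algebra_simps)
  then show ?thesis using a by linarith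
qed

lemma base1_pos: "\<bar>r\<bar> < 1 \<Longrightarrow> 1 - r\<^sup>2 > (0::real)"
  by (simp add: abs_square_less_1)

lemma phi_deriv:
  assumes r: "\<bar>r\<bar> < 1" and t: "\<bar>t\<bar> \<le> 1"
  shows "((\<lambda>r. phi \<gamma> \<beta> r t) has_real_derivative psi \<gamma> \<beta> r t) (at r)"
proof -
  have b1: "1 - r\<^sup>2 > 0" using r by (rule base1_pos)
  have b2: "1 - 2*r*t + r\<^sup>2 > 0" using r t by (rule base_pos)
  show ?thesis unfolding phi_def psi_def
    using b1 b2
    apply (intro derivative_eq_intros refl)
    apply auto
    done
qed

lemma phi0: "phi \<gamma> \<beta> 0 t = 1" by (simp add: phi_def)
lemma psi0: "psi \<gamma> \<beta> 0 t = 2 * \<beta> * t" by (simp add: psi_def)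

lemma psi_cont: "continuous_on ({0..1/2} \<times> {-1..1}) (\<lambda>p. psi \<gamma> \<beta> (fst p) (snd p))"
proof -
  have pos: "1 - (fst p)\<^sup>2 > 0 \<and> 1 - 2 * fst p * snd p + (fst p)\<^sup>2 > 0" if "p \<in> {0..1/2} \<times> {-1..1::real}" for p
    using that base1_pos[of "fst p"] base_pos[of "fst p" "snd p"] by (auto simp: mem_Times_iff)
  have p1: "\<forall>p\<in>{0..1/2::real} \<times> {-1..1::real}. 1 - (fst p)\<^sup>2 > 0" using pos by blast
  have p2: "\<forall>p\<in>{0..1/2::real} \<times> {-1..1::real}. 1 - 2 * fst p * snd p + (fst p)\<^sup>2 > 0" using pos by blast
  have q1: "\<forall>x\<in>{0..1/2::real} \<times> {-1..1::real}. 1 - (fst x)\<^sup>2 \<noteq> 0"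
  proof
    fix x :: "real \<times> real" assume "x \<in> {0..1/2::real} \<times> {-1..1::real}"
    then have "0 < 1 - (fst x)\<^sup>2" using p1 by blast
    then show "1 - (fst x)\<^sup>2 \<noteq> 0" by simp
  qed
  have q2: "\<forall>x\<in>{0..1/2::real} \<times> {-1..1::real}. 1 - 2 * fst x * snd x + (fst x)\<^sup>2 \<noteq> 0"
  proof
    fix x :: "real \<times> real" assume "x \<in> {0..1/2::real} \<times> {-1..1::real}"
    then have "0 < 1 - 2 * fst x * snd x + (fst x)\<^sup>2" using p2 by blast
    then show "1 - 2 * fst x * snd x + (fst x)\<^sup>2 \<noteq> 0" by simp
  qed
  show ?thesis unfolding psi_def
    apply (intro continuous_intros)
    apply (fact q1 q2)+
    done
qed

lemma phi_expansion:
  assumes "\<delta> > 0"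
  shows "\<exists>r0>0. \<forall>r t. 0 < r \<and> r < r0 \<and> \<bar>t\<bar> \<le> 1 \<longrightarrow> \<bar>phi \<gamma> \<beta> r t - 1 - 2 * \<beta> * r * t\<bar> \<le> \<delta> * r"
proof -
  let ?S = "{0..1/2} \<times> {-1..1::real}"
  have "uniformly_continuous_on ?S (\<lambda>p. psi \<gamma> \<beta> (fst p) (snd p))"
    by (intro compact_uniformly_continuous psi_cont compact_Times compact_Icc)
  then obtain d where d: "d > 0" and dd: "\<And>x x'. x \<in> ?S \<Longrightarrow> x' \<in> ?S \<Longrightarrow> dist x' x < d \<Longrightarrow>
      dist (psi \<gamma> \<beta> (fst x') (snd x')) (psi \<gamma> \<beta> (fst x) (snd x)) < \<delta>"
    unfolding uniformly_continuous_on_def using assms by metis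
  show ?thesis
  proof (intro exI[of _ "min d (1/2)"] conjI allI impI)
    show "min d (1/2) > 0" using d by simp
    fix r t :: real assume h: "0 < r \<and> r < min d (1/2) \<and> \<bar>t\<bar> \<le> 1"
    then have r: "0 < r" "r < d" "r < 1/2" and t: "\<bar>t\<bar> \<le> 1" by auto
    have "\<And>x. 0 \<le> x \<Longrightarrow> x \<le> r \<Longrightarrow> ((\<lambda>r. phi \<gamma> \<beta> r t) has_real_derivative psi \<gamma> \<beta> x t) (at x)"
      using r t by (auto intro!: phi_deriv)
    from MVT2[OF r(1) this] obtain z where z: "0 < z" "z < r"
      and eq: "phi \<gamma> \<beta> r t - phi \<gamma> \<beta> 0 t = (r - 0) * psi \<gamma> \<beta> z t" by blast
    have "dist (psi \<gamma> \<beta> (fst (z,t)) (snd (z,t))) (psi \<gamma> \<beta> (fst (0::real,t)) (snd (0::real,t))) < \<delta>"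
      using z r t by (intro dd) (auto simp: mem_Times_iff dist_Pair_Pair dist_real_def abs_le_iff)
    then have "\<bar>psi \<gamma> \<beta> z t - 2 * \<beta> * t\<bar> < \<delta>" by (simp add: psi0 dist_real_def)
    moreover have "phi \<gamma> \<beta> r t - 1 - 2 * \<beta> * r * t = r * (psi \<gamma> \<beta> z t - 2 * \<beta> * t)"
      using eq by (simp add: phi0 algebra_simps)
    ultimately show "\<bar>phi \<gamma> \<beta> r t - 1 - 2 * \<beta> * r * t\<bar> \<le> \<delta> * r"
      using r by (simp add: abs_mult mult.commute mult_left_mono)
  qed
qed


lemma mvt_powr_upper:
  fixes x y q :: real
  assumes q: "q \<ge> 1" and y: "0 \<le> y" and yx: "y \<le> x"
  shows "x powr q - y powr q \<le> q * x powr (q - 1) * (x - y)"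
proof (cases "y = x")
  case True then show ?thesis by simp
next
  case False
  then have yx': "y < x" using yx by simp
  show ?thesis
  proof (cases "y = 0")
    case True
    then have xp: "x > 0" using yx' by simp
    have e: "x powr (q - 1) * x = x powr q" using xp powr_add[of x "q - 1" 1] by simp
    have e2: "q * x powr (q - 1) * (x - y) = q * x powr q" using True e by (simp add: mult.assoc)
    have e3: "x powr q \<le> q * x powr q" using q by (simp add: mult_le_cancel_right1)
    have e4: "y powr q = 0" using True by simp
    show ?thesis using e2 e3 e4 by linarith
  next
    case False
    then have yp: "y > 0" using y by simp
    have "\<And>s. y \<le> s \<Longrightarrow> s \<le> x \<Longrightarrow> ((\<lambda>s. s powr q) has_real_derivative q * s powr (q - 1)) (at s)"
      using yp by (auto intro!: derivative_eq_intros simp: powr_diff)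
    from MVT2[OF yx' this] obtain z where z: "y < z" "z < x" and eq: "x powr q - y powr q = (x - y) * (q * z powr (q - 1))"
      by blast
    have "z powr (q - 1) \<le> x powr (q - 1)" using z yp q by (intro powr_mono2) auto
    then have "(x - y) * (q * z powr (q - 1)) \<le> (x - y) * (q * x powr (q - 1))"
      using yx' q by (intro mult_left_mono) auto
    then show ?thesis using eq by (simp add: mult_ac)
  qed
qed

lemma mvt_powr_lower:
  fixes x y q :: real
  assumes q: "q \<ge> 1" and y: "0 \<le> y" and yx: "y \<le> x"
  shows "q * y powr (q - 1) * (x - y) \<le> x powr q - y powr q"
proof (cases "y = x")
  case True then show ?thesis by simp
next
  case False
  then have yx': "y < x" using yx by simp
  show ?thesis
  proof (cases "y = 0")
    case True
    then show ?thesis by simp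
  next
    case False
    then have yp: "y > 0" using y by simp
    have "\<And>s. y \<le> s \<Longrightarrow> s \<le> x \<Longrightarrow> ((\<lambda>s. s powr q) has_real_derivative q * s powr (q - 1)) (at s)"
      using yp by (auto intro!: derivative_eq_intros simp: powr_diff)
    from MVT2[OF yx' this] obtain z where z: "y < z" "z < x" and eq: "x powr q - y powr q = (x - y) * (q * z powr (q - 1))"
      by blast
    have "y powr (q - 1) \<le> z powr (q - 1)" using z yp q by (intro powr_mono2) auto
    then have "(x - y) * (q * y powr (q - 1)) \<le> (x - y) * (q * z powr (q - 1))"
      using yx' q by (intro mult_left_mono) auto
    then show ?thesis using eq by (simp add: mult_ac)
  qed
qed

lemma midpoint_powr:
  fixes a b q :: real
  assumes q: "q \<ge> 1" and a: "a \<ge> 0" and b: "b \<ge> 0"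
  shows "2 * ((a + b) / 2) powr q \<le> a powr q + b powr q"
proof -
  { fix a b :: real assume a: "a \<ge> 0" and ba: "b \<le> a" and b: "b \<ge> 0"
    define c where "c = (a + b) / 2"
    have bc: "b \<le> c" "c \<le> a" "c \<ge> 0" using ba b unfolding c_def by auto
    have 1: "q * c powr (q - 1) * (a - c) \<le> a powr q - c powr q"
      using mvt_powr_lower[OF q bc(3) bc(2)] .
    have 2: "c powr q - b powr q \<le> q * c powr (q - 1) * (c - b)"
      using mvt_powr_upper[OF q b bc(1)] .
    have "a - c = c - b" unfolding c_def by (simp add: field_simps)
    then have "2 * c powr q \<le> a powr q + b powr q" using 1 2 by simp
    then have "2 * ((a + b) / 2) powr q \<le> a powr q + b powr q" unfolding c_def .
  } note * = this
  show ?thesis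
  proof (cases "b \<le> a")
    case True then show ?thesis using * a b by blast
  next
    case False then show ?thesis using *[of b a] a b by (simp add: add.commute)
  qed
qed

lemma convex_abs_powr:
  fixes u v q :: real
  assumes q: "q \<ge> 1"
  shows "2 * \<bar>(u - v) / 2\<bar> powr q \<le> \<bar>u\<bar> powr q + \<bar>v\<bar> powr q"
proof -
  have "\<bar>(u - v) / 2\<bar> \<le> (\<bar>u\<bar> + \<bar>v\<bar>) / 2" by simp
  then have "\<bar>(u - v) / 2\<bar> powr q \<le> ((\<bar>u\<bar> + \<bar>v\<bar>) / 2) powr q" using q by (intro powr_mono2) auto
  also have "2 * \<dots> \<le> \<bar>u\<bar> powr q + \<bar>v\<bar> powr q" using q by (intro midpoint_powr) auto
  finally show ?thesis by simp
qed

lemma root_ge: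
  fixes A I q :: real assumes "q > 0" "A \<ge> 0" "A powr q \<le> I"
  shows "A \<le> I powr (1/q)"
proof -
  have "(A powr q) powr (1/q) \<le> I powr (1/q)" using assms by (intro powr_mono2) auto
  then show ?thesis using assms by (simp add: powr_powr)
qed

lemma root_le:
  fixes B I q :: real assumes "q > 0" "I \<ge> 0" "I \<le> B powr q" "B \<ge> 0"
  shows "I powr (1/q) \<le> B"
proof -
  have "I powr (1/q) \<le> (B powr q) powr (1/q)" using assms by (intro powr_mono2) auto
  then show ?thesis using assms by (simp add: powr_powr)
qed

context prob_space
begin

lemma stab_lower:
  fixes T :: "'a \<Rightarrow> real" and D q Mq A :: real
  assumes q: "q \<ge> 1" and D: "D > 0" and Tm: "T \<in> borel_measurable M"
    and Tb: "AE x in M. \<bar>T x\<bar> \<le> 1"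
    and sym: "\<And>c. integral\<^sup>L M (\<lambda>x. \<bar>c + D * T x\<bar> powr q) \<ge> D powr q * Mq"
    and Mq: "Mq = integral\<^sup>L M (\<lambda>x. \<bar>T x\<bar> powr q)"
    and A: "0 < A" "A < D * Mq powr (1/q)"
  shows "\<exists>\<delta>>0. \<forall>f c. f \<in> borel_measurable M \<longrightarrow> (AE x in M. \<bar>f x - (c + D * T x)\<bar> \<le> \<delta>) \<longrightarrow>
           A \<le> (integral\<^sup>L M (\<lambda>x. \<bar>f x\<bar> powr q)) powr (1/q)"
proof -
  have q0: "q > 0" using q by simp
  have Mq0: "Mq \<ge> 0" unfolding Mq by (intro integral_nonneg_AE) auto
  have Mq1: "Mq \<le> 1"
  proof -
    have "Mq \<le> integral\<^sup>L M (\<lambda>x. 1)" unfolding Mq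
    proof (intro integral_mono_AE')
      show "AE x in M. \<bar>T x\<bar> powr q \<le> 1" using Tb
        by eventually_elim (use q0 in \<open>auto intro: powr_le1\<close>)
    qed auto
    then show ?thesis by (simp add: prob_space)
  qed
  define m where "m = Mq powr (1/q)"
  have m1: "m \<le> 1" unfolding m_def using Mq0 Mq1 q0 by (intro powr_le1) auto
  have m0: "m \<ge> 0" unfolding m_def by simp
  have Dmq: "(D * m) powr q = D powr q * Mq"
    unfolding m_def using D Mq0 q0 by (simp add: powr_mult powr_powr)
  have Aq: "A powr q < D powr q * Mq"
    using A q0 unfolding Dmq[symmetric] m_def[symmetric] by (intro powr_less_mono2) auto
  define \<delta> where "\<delta> = min D ((D powr q * Mq - A powr q) / (q * (4*D) powr (q-1)))"
  have \<delta>0: "\<delta> > 0" unfolding \<delta>_def using D Aq q0 by (auto intro!: divide_pos_pos)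
  show ?thesis
  proof (intro exI[of _ \<delta>] conjI allI impI \<delta>0)
    fix f c assume fm: "f \<in> borel_measurable M" and fb: "AE x in M. \<bar>f x - (c + D * T x)\<bar> \<le> \<delta>"
    have fint: "integrable M (\<lambda>x. \<bar>f x\<bar> powr q)"
    proof (rule integrable_const_bound[where B = "(\<bar>c\<bar> + D + \<delta>) powr q"])
      show "AE x in M. norm (\<bar>f x\<bar> powr q) \<le> (\<bar>c\<bar> + D + \<delta>) powr q"
        using fb Tb
      proof eventually_elim
        case (elim x)
        have "\<bar>D * T x\<bar> \<le> D" using elim D by (simp add: abs_mult mult_left_le)
        then have "\<bar>f x\<bar> \<le> \<bar>c\<bar> + D + \<delta>" using elim by linarith
        then show ?case using q0 by (simp add: powr_mono2)
      qed
    qed (use fm in measurable)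
    show "A \<le> (integral\<^sup>L M (\<lambda>x. \<bar>f x\<bar> powr q)) powr (1/q)"
    proof (cases "\<bar>c\<bar> \<ge> 3 * D")
      case True
      have "integral\<^sup>L M (\<lambda>x. D powr q) \<le> integral\<^sup>L M (\<lambda>x. \<bar>f x\<bar> powr q)"
      proof (intro integral_mono_AE fint)
        show "AE x in M. D powr q \<le> \<bar>f x\<bar> powr q"
          using fb Tb
        proof eventually_elim
          case (elim x)
          have "\<bar>D * T x\<bar> \<le> D" using elim D by (simp add: abs_mult mult_left_le)
          moreover have "\<delta> \<le> D" unfolding \<delta>_def by simp
          ultimately have "D \<le> \<bar>f x\<bar>" using elim True by linarith
          then show ?case using D q0 by (intro powr_mono2) auto
        qed
      qed auto
      then have "D powr q \<le> integral\<^sup>L M (\<lambda>x. \<bar>f x\<bar> powr q)" by (simp add: prob_space)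
      then have "D \<le> (integral\<^sup>L M (\<lambda>x. \<bar>f x\<bar> powr q)) powr (1/q)"
        using D q0 by (intro root_ge) auto
      moreover have "A < D" using A m1 D unfolding m_def[symmetric]
        by (smt (verit) mult_left_le)
      ultimately show ?thesis by simp
    next
      case False
      define K where "K = q * (4*D) powr (q-1) * \<delta>"
      have K: "K \<le> D powr q * Mq - A powr q"
      proof -
        have "\<delta> \<le> (D powr q * Mq - A powr q) / (q * (4*D) powr (q-1))" unfolding \<delta>_def by simp
        moreover have "q * (4*D) powr (q-1) > 0" using q0 D by simp
        ultimately show ?thesis unfolding K_def by (simp add: field_simps mult.commute)
      qed
      have uint: "integrable M (\<lambda>x. \<bar>c + D * T x\<bar> powr q)"
      proof (rule integrable_const_bound[where B = "(\<bar>c\<bar> + D) powr q"])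
        show "AE x in M. norm (\<bar>c + D * T x\<bar> powr q) \<le> (\<bar>c\<bar> + D) powr q"
          using Tb
        proof eventually_elim
          case (elim x)
          have "\<bar>D * T x\<bar> \<le> D" using elim D by (simp add: abs_mult mult_left_le)
          then have "\<bar>c + D * T x\<bar> \<le> \<bar>c\<bar> + D" by linarith
          then show ?case using q0 by (simp add: powr_mono2)
        qed
      qed (use Tm in measurable)
      have "integral\<^sup>L M (\<lambda>x. \<bar>c + D * T x\<bar> powr q - K) \<le> integral\<^sup>L M (\<lambda>x. \<bar>f x\<bar> powr q)"
      proof (intro integral_mono_AE fint)
        show "integrable M (\<lambda>x. \<bar>c + D * T x\<bar> powr q - K)" using uint by auto
        show "AE x in M. \<bar>c + D * T x\<bar> powr q - K \<le> \<bar>f x\<bar> powr q"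
          using fb Tb
        proof eventually_elim
          case (elim x)
          let ?u = "\<bar>c + D * T x\<bar>" and ?y = "\<bar>f x\<bar>"
          have "\<bar>D * T x\<bar> \<le> D" using elim D by (simp add: abs_mult mult_left_le)
          then have u4: "?u \<le> 4 * D" using False by linarith
          show ?case
          proof (cases "?y \<ge> ?u")
            case True
            then have "?u powr q \<le> ?y powr q" using q0 by (intro powr_mono2) auto
            moreover have "K \<ge> 0" unfolding K_def using q0 \<delta>0 by simp
            ultimately show ?thesis by linarith
          next
            case yu: False
            have "?u powr q - ?y powr q \<le> q * ?u powr (q - 1) * (?u - ?y)"
              using yu q by (intro mvt_powr_upper) auto
            also have "\<dots> \<le> q * (4*D) powr (q - 1) * \<delta>"
            proof (rule mult_mono)
              show "q * ?u powr (q - 1) \<le> q * (4*D) powr (q - 1)"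
                using u4 q by (intro mult_left_mono powr_mono2) auto
              show "?u - ?y \<le> \<delta>" using elim by linarith
            qed (use q0 D yu in auto)
            finally show ?thesis unfolding K_def by linarith
          qed
        qed
      qed
      also have "integral\<^sup>L M (\<lambda>x. \<bar>c + D * T x\<bar> powr q - K) = integral\<^sup>L M (\<lambda>x. \<bar>c + D * T x\<bar> powr q) - K"
        using uint by (simp add: prob_space)
      finally have "integral\<^sup>L M (\<lambda>x. \<bar>c + D * T x\<bar> powr q) - K \<le> integral\<^sup>L M (\<lambda>x. \<bar>f x\<bar> powr q)" .
      then have "A powr q \<le> integral\<^sup>L M (\<lambda>x. \<bar>f x\<bar> powr q)" using sym[of c] K by linarith
      then show ?thesis using A q0 by (intro root_ge) auto
    qed
  qed
qed

lemma stab_upper: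
  fixes T :: "'a \<Rightarrow> real" and D q Mq B :: real
  assumes q: "q \<ge> 1" and D: "D > 0" and Tm: "T \<in> borel_measurable M"
    and Tb: "AE x in M. \<bar>T x\<bar> \<le> 1"
    and Mq: "Mq = integral\<^sup>L M (\<lambda>x. \<bar>T x\<bar> powr q)"
    and B: "D * Mq powr (1/q) < B"
  shows "\<exists>\<delta>>0. \<forall>f. f \<in> borel_measurable M \<longrightarrow> (AE x in M. \<bar>f x - D * T x\<bar> \<le> \<delta>) \<longrightarrow>
           (integral\<^sup>L M (\<lambda>x. \<bar>f x\<bar> powr q)) powr (1/q) \<le> B"
proof -
  have q0: "q > 0" using q by simp
  have Mq0: "Mq \<ge> 0" unfolding Mq by (intro integral_nonneg_AE) auto
  define m where "m = Mq powr (1/q)"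
  have m0: "m \<ge> 0" unfolding m_def by simp
  have B0: "B > 0" using B D m0 unfolding m_def[symmetric] by (smt (verit) mult_nonneg_nonneg)
  have Dmq: "(D * m) powr q = D powr q * Mq"
    unfolding m_def using D Mq0 q0 by (simp add: powr_mult powr_powr)
  have Bq: "D powr q * Mq < B powr q"
    using B q0 m0 D unfolding Dmq[symmetric] m_def[symmetric] by (intro powr_less_mono2) auto
  define \<delta> where "\<delta> = min 1 ((B powr q - D powr q * Mq) / (q * (D + 1) powr (q-1)))"
  have \<delta>0: "\<delta> > 0" unfolding \<delta>_def using D Bq q0 by (auto intro!: divide_pos_pos)
  have Tint: "integrable M (\<lambda>x. \<bar>T x\<bar> powr q)"
  proof (rule integrable_const_bound[where B = 1])
    show "AE x in M. norm (\<bar>T x\<bar> powr q) \<le> 1" using Tb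
      by eventually_elim (use q0 in \<open>auto intro: powr_le1\<close>)
  qed (use Tm in measurable)
  show ?thesis
  proof (intro exI[of _ \<delta>] conjI allI impI \<delta>0)
    fix f assume fm: "f \<in> borel_measurable M" and fb: "AE x in M. \<bar>f x - D * T x\<bar> \<le> \<delta>"
    define K where "K = q * (D + 1) powr (q-1) * \<delta>"
    have K: "K \<le> B powr q - D powr q * Mq"
    proof -
      have "\<delta> \<le> (B powr q - D powr q * Mq) / (q * (D + 1) powr (q-1))" unfolding \<delta>_def by simp
      moreover have "q * (D + 1) powr (q-1) > 0" using q0 D by simp
      ultimately show ?thesis unfolding K_def by (simp add: field_simps mult.commute)
    qed
    have fint: "integrable M (\<lambda>x. \<bar>f x\<bar> powr q)"
    proof (rule integrable_const_bound[where B = "(D + \<delta>) powr q"])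
      show "AE x in M. norm (\<bar>f x\<bar> powr q) \<le> (D + \<delta>) powr q"
        using fb Tb
      proof eventually_elim
        case (elim x)
        have "\<bar>D * T x\<bar> \<le> D" using elim D by (simp add: abs_mult mult_left_le)
        then have "\<bar>f x\<bar> \<le> D + \<delta>" using elim by linarith
        then show ?case using q0 by (simp add: powr_mono2)
      qed
    qed (use fm in measurable)
    have "integral\<^sup>L M (\<lambda>x. \<bar>f x\<bar> powr q) \<le> integral\<^sup>L M (\<lambda>x. D powr q * \<bar>T x\<bar> powr q + K)"
    proof (intro integral_mono_AE fint)
      show "integrable M (\<lambda>x. D powr q * \<bar>T x\<bar> powr q + K)" using Tint by auto
      show "AE x in M. \<bar>f x\<bar> powr q \<le> D powr q * \<bar>T x\<bar> powr q + K"
        using fb Tb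
      proof eventually_elim
        case (elim x)
        let ?y = "D * \<bar>T x\<bar>" 
        let ?x = "D * \<bar>T x\<bar> + \<delta>"
        have y0: "?y \<ge> 0" using D by simp
        have yD: "?y \<le> D" using elim D by (simp add: mult_left_le)
        have d1: "\<delta> \<le> 1" unfolding \<delta>_def by simp
        have "\<bar>D * T x\<bar> = D * \<bar>T x\<bar>" using D by (simp add: abs_mult)
        then have fx: "\<bar>f x\<bar> \<le> ?x" using elim by linarith
        have "\<bar>f x\<bar> powr q \<le> ?x powr q" using fx q0 by (intro powr_mono2) auto
        also have "?x powr q - ?y powr q \<le> q * ?x powr (q - 1) * (?x - ?y)"
          using q y0 \<delta>0 by (intro mvt_powr_upper) auto
        then have "?x powr q \<le> ?y powr q + q * ?x powr (q - 1) * \<delta>" by simp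
        also have "q * ?x powr (q - 1) * \<delta> \<le> K"
          unfolding K_def using q yD d1 \<delta>0 y0
          by (intro mult_right_mono mult_left_mono powr_mono2) auto
        also have "?y powr q = D powr q * \<bar>T x\<bar> powr q" using D by (simp add: powr_mult)
        finally show ?case by simp
      qed
    qed
    also have "\<dots> = D powr q * Mq + K" using Tint unfolding Mq by (simp add: prob_space)
    also have "\<dots> \<le> B powr q" using K by simp
    finally show "(integral\<^sup>L M (\<lambda>x. \<bar>f x\<bar> powr q)) powr (1/q) \<le> B"
      using q0 B0 by (intro root_le) (auto intro: integral_nonneg_AE)
  qed
qed

end


lemma P_measurable[measurable]: "(\<lambda>\<zeta>. P_kernel \<alpha> x \<zeta>) \<in> borel_measurable borel"
  unfolding P_kernel_def by measurable

lemma P_phi: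
  fixes \<eta> :: "real^'n::finite"
  assumes \<eta>: "norm \<eta> = 1" and r: "0 \<le> r" "r < 1"
  shows "P_kernel \<alpha> (r *\<^sub>R axis i 1) \<eta> =
    C_const (real CARD('n)) \<alpha> * phi (1 + 2*\<alpha>) ((real CARD('n) + 2*\<alpha>) / 2) r (\<eta>$i)"
proof -
  let ?x = "r *\<^sub>R axis i 1 :: real^'n"
  have t: "\<bar>\<eta>$i\<bar> \<le> 1" using component_le_norm_cart[of \<eta> i] \<eta> by simp
  have nx: "norm ?x = r" using r by simp
  have "(norm (?x - \<eta>))\<^sup>2 = (?x - \<eta>) \<bullet> (?x - \<eta>)" by (simp add: power2_norm_eq_inner)
  also have "\<dots> = ?x \<bullet> ?x - 2 * (?x \<bullet> \<eta>) + \<eta> \<bullet> \<eta>"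
    by (simp add: inner_diff_left inner_diff_right inner_commute)
  also have "?x \<bullet> ?x = r\<^sup>2" by (simp add: power2_eq_square inner_axis_axis)
  also have "?x \<bullet> \<eta> = r * \<eta>$i" by (simp add: inner_axis')
  also have "\<eta> \<bullet> \<eta> = 1" using \<eta> by (simp add: norm_eq_1)
  finally have nd: "(norm (?x - \<eta>))\<^sup>2 = 1 - 2 * r * \<eta>$i + r\<^sup>2" by simp
  have pos: "1 - 2 * r * \<eta>$i + r\<^sup>2 > 0" using r t by (intro base_pos) auto
  then have "(norm (?x - \<eta>))\<^sup>2 > 0" using nd by simp
  then have np: "norm (?x - \<eta>) > 0" by (simp add: zero_less_power2)
  have "norm (?x - \<eta>) powr (real CARD('n) + 2*\<alpha>) = (norm (?x - \<eta>) powr 2) powr ((real CARD('n) + 2*\<alpha>) / 2)"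
  proof -
    have "(norm (?x - \<eta>) powr 2) powr ((real CARD('n) + 2*\<alpha>) / 2) = norm (?x - \<eta>) powr (2 * ((real CARD('n) + 2*\<alpha>) / 2))"
      by (rule powr_powr)
    also have "2 * ((real CARD('n) + 2*\<alpha>) / 2) = real CARD('n) + 2*\<alpha>" by simp
    finally show ?thesis by simp
  qed
  also have "norm (?x - \<eta>) powr 2 = 1 - 2 * r * \<eta>$i + r\<^sup>2" using np nd by (simp add: powr_realpow)
  finally have "norm (?x - \<eta>) powr (real CARD('n) + 2*\<alpha>) = (1 - 2 * r * \<eta>$i + r\<^sup>2) powr ((real CARD('n) + 2*\<alpha>) / 2)" .
  then show ?thesis
    unfolding P_kernel_def phi_def nx by (simp only: powr_minus divide_inverse mult.assoc)
qed

lemma P_zero: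
  fixes \<eta> :: "real^'n::finite"
  assumes \<eta>: "norm \<eta> = 1"
  shows "P_kernel \<alpha> (0 *\<^sub>R axis i 1) \<eta> = C_const (real CARD('n)) \<alpha>"
  using \<eta> by (simp add: P_kernel_def)

lemma C_pos: "n \<ge> 1 \<Longrightarrow> \<alpha> > -1/2 \<Longrightarrow> C_const n \<alpha> > 0"
  unfolding C_const_def by (intro divide_pos_pos mult_pos_pos Gamma_real_pos) auto

lemma moment:
  fixes i :: "'n::finite" and q :: real
  assumes q: "q > 0"
  shows "integral\<^sup>L (sphere_sigma::(real^'n) measure) (\<lambda>\<eta>. \<bar>\<eta>$i\<bar> powr q)
     = Gamma (real CARD('n)/2) * Gamma ((1+q)/2) / (sqrt pi * Gamma ((real CARD('n)+q)/2))"
proof -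
  have pos: "Gamma (real CARD('n)/2) * Gamma ((1+q)/2) / (sqrt pi * Gamma ((real CARD('n)+q)/2)) > 0"
    using q by (intro divide_pos_pos mult_pos_pos Gamma_real_pos) auto
  have "integral\<^sup>L (sphere_sigma::(real^'n) measure) (\<lambda>\<eta>. \<bar>\<eta>$i\<bar> powr q) =
     enn2real (\<integral>\<^sup>+\<eta>. ennreal (\<bar>\<eta>$i\<bar> powr q) \<partial>(sphere_sigma::(real^'n) measure))"
    by (rule integral_eq_nn_integral) auto
  also have "\<dots> = Gamma (real CARD('n)/2) * Gamma ((1+q)/2) / (sqrt pi * Gamma ((real CARD('n)+q)/2))"
    unfolding moment_nn[OF q] using pos by simp
  finally show ?thesis .
qed

lemma sym_bound:
  fixes i :: "'n::finite" and q D c :: real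
  assumes q: "q \<ge> 1" and D: "D > 0"
  shows "integral\<^sup>L (sphere_sigma::(real^'n) measure) (\<lambda>\<eta>. \<bar>c + D * \<eta>$i\<bar> powr q)
     \<ge> D powr q * integral\<^sup>L (sphere_sigma::(real^'n) measure) (\<lambda>\<eta>. \<bar>\<eta>$i\<bar> powr q)"
proof -
  interpret prob_space "sphere_sigma::(real^'n) measure" by (rule prob_space_sigma)
  have q0: "q > 0" using q by simp
  let ?g = "\<lambda>\<eta>::real^'n. \<bar>c + D * \<eta>$i\<bar> powr q"
  have Tb: "AE \<eta> in sphere_sigma. \<bar>\<eta>$i\<bar> \<le> (1::real)"
    using AE_sphere by eventually_elim (metis component_le_norm_cart)
  have gint: "integrable sphere_sigma ?g"
  proof (rule integrable_const_bound[where B = "(\<bar>c\<bar> + D) powr q"])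
    show "AE x in sphere_sigma. norm (?g x) \<le> (\<bar>c\<bar> + D) powr q"
      using Tb
    proof eventually_elim
      case (elim x)
      have "\<bar>D * x$i\<bar> \<le> D" using elim D by (simp add: abs_mult mult_left_le)
      then have "\<bar>c + D * x$i\<bar> \<le> \<bar>c\<bar> + D" by linarith
      then show ?case using q0 by (simp add: powr_mono2)
    qed
  qed simp
  have gint2: "integrable sphere_sigma (\<lambda>\<eta>. ?g (-\<eta>))"
  proof (rule integrable_const_bound[where B = "(\<bar>c\<bar> + D) powr q"])
    show "AE x in sphere_sigma. norm (?g (-x)) \<le> (\<bar>c\<bar> + D) powr q"
      using Tb
    proof eventually_elim
      case (elim x)
      have "\<bar>D * (-x)$i\<bar> \<le> D" using elim D by (simp add: abs_mult mult_left_le)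
      then have "\<bar>c + D * (-x)$i\<bar> \<le> \<bar>c\<bar> + D" by linarith
      then show ?case using q0 by (simp add: powr_mono2)
    qed
  qed simp
  have Tint: "integrable sphere_sigma (\<lambda>\<eta>::real^'n. \<bar>\<eta>$i\<bar> powr q)"
  proof (rule integrable_const_bound[where B = 1])
    show "AE x in sphere_sigma. norm (\<bar>x$i\<bar> powr q) \<le> (1::real)" using Tb
      by eventually_elim (use q0 in \<open>auto intro: powr_le1\<close>)
  qed simp
  have "integral\<^sup>L sphere_sigma (\<lambda>\<eta>. 2 * (D powr q * \<bar>\<eta>$i\<bar> powr q)) \<le> integral\<^sup>L sphere_sigma (\<lambda>\<eta>. ?g \<eta> + ?g (-\<eta>))"
  proof (intro integral_mono_AE)
    show "integrable sphere_sigma (\<lambda>\<eta>. 2 * (D powr q * \<bar>\<eta>$i\<bar> powr q))" using Tint by auto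
    show "integrable sphere_sigma (\<lambda>\<eta>. ?g \<eta> + ?g (-\<eta>))" using gint gint2 by auto
    show "AE \<eta> in sphere_sigma. 2 * (D powr q * \<bar>\<eta>$i\<bar> powr q) \<le> ?g \<eta> + ?g (-\<eta>)"
    proof (intro AE_I2)
      fix \<eta> :: "real^'n"
      have "2 * \<bar>((c + D * \<eta>$i) - (c - D * \<eta>$i)) / 2\<bar> powr q \<le> \<bar>c + D * \<eta>$i\<bar> powr q + \<bar>c - D * \<eta>$i\<bar> powr q"
        using q by (rule convex_abs_powr)
      moreover have "\<bar>((c + D * \<eta>$i) - (c - D * \<eta>$i)) / 2\<bar> powr q = D powr q * \<bar>\<eta>$i\<bar> powr q"
        using D by (simp add: abs_mult powr_mult)
      ultimately show "2 * (D powr q * \<bar>\<eta>$i\<bar> powr q) \<le> ?g \<eta> + ?g (-\<eta>)" by simp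
    qed
  qed
  also have "\<dots> = integral\<^sup>L sphere_sigma ?g + integral\<^sup>L sphere_sigma (\<lambda>\<eta>. ?g (-\<eta>))"
    using gint gint2 by simp
  also have "integral\<^sup>L sphere_sigma (\<lambda>\<eta>. ?g (-\<eta>)) = integral\<^sup>L sphere_sigma ?g"
    by (rule integral_sigma_uminus) measurable
  finally show ?thesis by simp
qed


lemma term_scale:
  fixes g :: "'a \<Rightarrow> real" and K q :: real
  assumes K: "K > 0" and q: "q > 0"
  shows "(integral\<^sup>L M (\<lambda>x. \<bar>g x\<bar> powr q)) powr (1/q) = K * (integral\<^sup>L M (\<lambda>x. \<bar>g x / K\<bar> powr q)) powr (1/q)"
proof -
  have "\<And>x. \<bar>g x\<bar> powr q = K powr q * \<bar>g x / K\<bar> powr q"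
  proof -
    fix x
    have "\<bar>g x\<bar> = K * \<bar>g x / K\<bar>" using K by (simp add: abs_div)
    then show "\<bar>g x\<bar> powr q = K powr q * \<bar>g x / K\<bar> powr q" using K by (metis abs_ge_zero less_imp_le powr_mult)
  qed
  then have "integral\<^sup>L M (\<lambda>x. \<bar>g x\<bar> powr q) = K powr q * integral\<^sup>L M (\<lambda>x. \<bar>g x / K\<bar> powr q)"
    by simp
  moreover have "integral\<^sup>L M (\<lambda>x. \<bar>g x / K\<bar> powr q) \<ge> 0" by (intro integral_nonneg_AE) auto
  ultimately show ?thesis using K q by (simp add: powr_mult powr_powr)
qed

lemma expansion_AE:
  fixes i :: "'n::finite" and \<alpha> r r0 \<delta> C a :: real
  defines "D \<equiv> real CARD('n) + 2*\<alpha>"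
  assumes exp: "\<forall>r t. 0 < r \<and> r < r0 \<and> \<bar>t\<bar> \<le> 1 \<longrightarrow> \<bar>phi (1 + 2*\<alpha>) (D/2) r t - 1 - 2 * (D/2) * r * t\<bar> \<le> \<delta> * r"
    and r: "0 < r" "r < r0" "r < 1"
    and C: "C = C_const (real CARD('n)) \<alpha>" "C > 0"
  shows "AE \<eta> in (sphere_sigma::(real^'n) measure).
     \<bar>(P_kernel \<alpha> (r *\<^sub>R axis i 1) \<eta> - a) / (C * r) - ((C - a) / (C * r) + D * \<eta>$i)\<bar> \<le> \<delta>"
  using AE_sphere
proof eventually_elim
  case (elim \<eta>)
  have t: "\<bar>\<eta>$i\<bar> \<le> 1" using component_le_norm_cart[of \<eta> i] elim by simp
  have P: "P_kernel \<alpha> (r *\<^sub>R axis i 1) \<eta> = C * phi (1 + 2*\<alpha>) (D/2) r (\<eta>$i)"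
    unfolding C(1) D_def using P_phi[OF elim, of r \<alpha> i] r by simp
  have b: "\<bar>phi (1 + 2*\<alpha>) (D/2) r (\<eta>$i) - 1 - 2 * (D/2) * r * \<eta>$i\<bar> \<le> \<delta> * r"
    using exp r t by blast
  have "(P_kernel \<alpha> (r *\<^sub>R axis i 1) \<eta> - a) / (C * r) - ((C - a) / (C * r) + D * \<eta>$i)
      = (phi (1 + 2*\<alpha>) (D/2) r (\<eta>$i) - 1 - 2 * (D/2) * r * \<eta>$i) / r"
    unfolding P using C(2) r(1) by (simp add: field_simps)
  then show ?case using b r(1) by (simp add: abs_div divide_le_eq)
qed


theorem lemma3p4:
  fixes \<alpha> p :: real and i :: "'n::finite"
  assumes "CARD('n) \<ge> 3" and "\<alpha> > -1/2" and "p > 1"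
  defines "q \<equiv> p / (p - 1)" and "n \<equiv> real CARD('n)"
  shows "((\<lambda>r. G_fun \<alpha> p (axis i 1 :: real^'n) r) has_real_derivative
           C_const n \<alpha> * (n + 2*\<alpha>) *
           (Gamma (n/2) * Gamma ((1+q)/2) / (sqrt pi * Gamma ((n+q)/2))) powr (1/q))
         (at 0 within {0..<1})"
proof -
  interpret S: prob_space "sphere_sigma::(real^'n) measure" by (rule prob_space_sigma)
  have n3: "n \<ge> 3" using assms(1) unfolding n_def by simp
  have q1: "q > 1" unfolding q_def using assms(3) by (simp add: field_simps)
  then have q0: "q > 0" by simp
  define C where "C = C_const n \<alpha>"
  have C0: "C > 0" unfolding C_def using n3 assms(2) by (intro C_pos) auto
  define D where "D = n + 2*\<alpha>"
  have D0: "D > 0" unfolding D_def using n3 assms(2) by simp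
  define Mq where "Mq = integral\<^sup>L (sphere_sigma::(real^'n) measure) (\<lambda>\<eta>. \<bar>\<eta>$i\<bar> powr q)"
  have Mq_eq: "Mq = Gamma (n/2) * Gamma ((1+q)/2) / (sqrt pi * Gamma ((n+q)/2))"
    unfolding Mq_def n_def by (rule moment[OF q0])
  have Mq0: "Mq > 0" unfolding Mq_eq using q0 n3 by (intro divide_pos_pos mult_pos_pos Gamma_real_pos) auto
  define m where "m = Mq powr (1/q)"
  have m0: "m > 0" unfolding m_def using Mq0 by simp
  define L where "L = C * D * m"
  define Gf where "Gf = (\<lambda>r. G_fun \<alpha> p (axis i 1 :: real^'n) r)"
  define tm where "tm = (\<lambda>r a. (integral\<^sup>L (sphere_sigma::(real^'n) measure) (\<lambda>\<eta>. \<bar>P_kernel \<alpha> (r *\<^sub>R axis i 1) \<eta> - a\<bar> powr q)) powr (1/q))"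
  have Gdef: "Gf r = (INF a\<in>{0::real..}. tm r a)" for r
    unfolding Gf_def G_fun_def tm_def q_def Let_def by simp
  have tm0: "tm r a \<ge> 0" for r a unfolding tm_def by simp
  have bdd: "bdd_below (tm r ` {0..})" for r using tm0 by (intro bdd_belowI[of _ 0]) auto
  have Tm: "(\<lambda>\<eta>::real^'n. \<eta>$i) \<in> borel_measurable sphere_sigma" by simp
  have Tb: "AE \<eta> in (sphere_sigma::(real^'n) measure). \<bar>\<eta>$i\<bar> \<le> 1"
    using AE_sphere by eventually_elim (metis component_le_norm_cart)
  have sym: "\<And>c. integral\<^sup>L (sphere_sigma::(real^'n) measure) (\<lambda>\<eta>. \<bar>c + D * \<eta>$i\<bar> powr q) \<ge> D powr q * Mq"
    unfolding Mq_def using q1 D0 by (intro sym_bound) auto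
  have G0: "Gf 0 = 0"
  proof -
    have tmz: "tm 0 a = \<bar>C - a\<bar>" for a
    proof -
      have "integral\<^sup>L (sphere_sigma::(real^'n) measure) (\<lambda>\<eta>. \<bar>P_kernel \<alpha> (0 *\<^sub>R axis i 1) \<eta> - a\<bar> powr q)
          = integral\<^sup>L (sphere_sigma::(real^'n) measure) (\<lambda>\<eta>. \<bar>C - a\<bar> powr q)"
      proof -
        have Pz: "\<And>\<eta>::real^'n. norm \<eta> = 1 \<Longrightarrow> P_kernel \<alpha> (0 *\<^sub>R axis i 1) \<eta> = C"
          unfolding C_def n_def by (rule P_zero)
        show ?thesis using AE_sphere by (intro integral_cong_AE) (auto elim!: eventually_mono simp del: scale_zero_left simp: Pz)
      qed
      also have "\<dots> = \<bar>C - a\<bar> powr q"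
      proof -
        have "S.prob UNIV = 1" using S.prob_space by simp
        then show ?thesis by simp
      qed
      finally show ?thesis unfolding tm_def using q0 by (simp add: powr_powr)
    qed
    have "Gf 0 \<le> tm 0 C" unfolding Gdef using C0 by (intro cINF_lower bdd) auto
    moreover have "Gf 0 \<ge> 0" unfolding Gdef by (intro cINF_greatest tm0) auto
    ultimately show ?thesis using tmz by simp
  qed
  have key: "\<exists>d>0. \<forall>r. 0 < r \<and> r < d \<longrightarrow> \<bar>Gf r / r - L\<bar> < \<epsilon>" if \<epsilon>: "\<epsilon> > 0" for \<epsilon>
  proof -
    define A where "A = max (D * m / 2) (D * m - \<epsilon> / (2 * C))"
    define B where "B = D * m + \<epsilon> / (2 * C)"
    have "D * m > 0" using D0 m0 by simp
    then have A0: "A > 0" unfolding A_def by (simp add: less_max_iff_disj)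
    have AD: "A < D * Mq powr (1/q)" unfolding A_def m_def[symmetric] using D0 m0 \<epsilon> C0 by simp
    have BD: "D * Mq powr (1/q) < B" unfolding B_def m_def[symmetric] using \<epsilon> C0 by simp
    obtain \<delta>1 where d1: "\<delta>1 > 0" and low: "\<And>f c. f \<in> borel_measurable sphere_sigma \<Longrightarrow>
        (AE x in sphere_sigma. \<bar>f x - (c + D * x$i)\<bar> \<le> \<delta>1) \<Longrightarrow>
        A \<le> (integral\<^sup>L (sphere_sigma::(real^'n) measure) (\<lambda>x. \<bar>f x\<bar> powr q)) powr (1/q)"
      using S.stab_lower[OF less_imp_le[OF q1] D0 Tm Tb sym Mq_def A0 AD] by blast
    obtain \<delta>2 where d2: "\<delta>2 > 0" and upp: "\<And>f. f \<in> borel_measurable sphere_sigma \<Longrightarrow>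
        (AE x in sphere_sigma. \<bar>f x - D * x$i\<bar> \<le> \<delta>2) \<Longrightarrow>
        (integral\<^sup>L (sphere_sigma::(real^'n) measure) (\<lambda>x. \<bar>f x\<bar> powr q)) powr (1/q) \<le> B"
      using S.stab_upper[OF less_imp_le[OF q1] D0 Tm Tb Mq_def BD] by blast
    define \<delta> where "\<delta> = min \<delta>1 \<delta>2"
    have d0: "\<delta> > 0" unfolding \<delta>_def using d1 d2 by simp
    obtain r0 where r0: "r0 > 0" and exp: "\<forall>r t. 0 < r \<and> r < r0 \<and> \<bar>t\<bar> \<le> 1 \<longrightarrow>
        \<bar>phi (1 + 2*\<alpha>) (D/2) r t - 1 - 2 * (D/2) * r * t\<bar> \<le> \<delta> * r"
      using phi_expansion[OF d0] by blast
    show ?thesis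
    proof (intro exI[of _ "min r0 1"] conjI allI impI)
      show "min r0 1 > 0" using r0 by simp
      fix r assume r: "0 < r \<and> r < min r0 1"
      then have r1: "0 < r" "r < r0" "r < 1" by auto
      have Cr: "C * r > 0" using C0 r1 by simp
      have AEb: "AE \<eta> in (sphere_sigma::(real^'n) measure).
          \<bar>(P_kernel \<alpha> (r *\<^sub>R axis i 1) \<eta> - a) / (C * r) - ((C - a) / (C * r) + D * \<eta>$i)\<bar> \<le> \<delta>" for a
        using expansion_AE[of r0 \<alpha> \<delta> r C i a] exp r1 C0 unfolding D_def C_def n_def by simp
      have sc: "tm r a = (C * r) * (integral\<^sup>L (sphere_sigma::(real^'n) measure)
          (\<lambda>\<eta>. \<bar>(P_kernel \<alpha> (r *\<^sub>R axis i 1) \<eta> - a) / (C * r)\<bar> powr q)) powr (1/q)" for a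
        unfolding tm_def by (rule term_scale[OF Cr q0])
      have lowr: "C * r * A \<le> tm r a" for a
      proof -
        have "A \<le> (integral\<^sup>L (sphere_sigma::(real^'n) measure)
          (\<lambda>\<eta>. \<bar>(P_kernel \<alpha> (r *\<^sub>R axis i 1) \<eta> - a) / (C * r)\<bar> powr q)) powr (1/q)"
        proof (rule low[of _ "(C - a) / (C * r)"])
          show "AE x in sphere_sigma. \<bar>(P_kernel \<alpha> (r *\<^sub>R axis i 1) x - a) / (C * r) - ((C - a) / (C * r) + D * x$i)\<bar> \<le> \<delta>1"
            using AEb[of a] by eventually_elim (simp add: \<delta>_def)
        qed simp
        then show ?thesis unfolding sc using Cr by (simp add: mult_left_mono)
      qed
      have uppr: "tm r C \<le> C * r * B"
      proof -
        have "(integral\<^sup>L (sphere_sigma::(real^'n) measure)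
          (\<lambda>\<eta>. \<bar>(P_kernel \<alpha> (r *\<^sub>R axis i 1) \<eta> - C) / (C * r)\<bar> powr q)) powr (1/q) \<le> B"
        proof (rule upp)
          show "AE x in sphere_sigma. \<bar>(P_kernel \<alpha> (r *\<^sub>R axis i 1) x - C) / (C * r) - D * x$i\<bar> \<le> \<delta>2"
            using AEb[of C] by eventually_elim (simp add: \<delta>_def)
        qed simp
        then show ?thesis unfolding sc using Cr by (simp add: mult_left_mono)
      qed
      have Glow: "C * r * A \<le> Gf r" unfolding Gdef by (intro cINF_greatest lowr) auto
      have Gupp: "Gf r \<le> C * r * B"
      proof -
        have "Gf r \<le> tm r C" unfolding Gdef using C0 by (intro cINF_lower bdd) auto
        then show ?thesis using uppr by simp
      qed
      have "C * A \<le> Gf r / r" using Glow r1 by (simp add: field_simps)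
      moreover have "Gf r / r \<le> C * B" using Gupp r1 by (simp add: field_simps)
      moreover have "C * A \<ge> L - \<epsilon> / 2"
      proof -
        have "A \<ge> D * m - \<epsilon> / (2 * C)" unfolding A_def by simp
        then have "C * A \<ge> C * (D * m - \<epsilon> / (2 * C))" using C0 by (simp add: mult_left_mono)
        moreover have "C * (D * m - \<epsilon> / (2 * C)) = C * D * m - \<epsilon> / 2" using C0 by (simp add: field_simps)
        ultimately show ?thesis unfolding L_def by linarith
      qed
      moreover have "C * B = L + \<epsilon> / 2" unfolding B_def L_def using C0 by (simp add: field_simps)
      ultimately show "\<bar>Gf r / r - L\<bar> < \<epsilon>" using \<epsilon> by linarith
    qed
  qed
  have lim: "((\<lambda>y. (Gf y - Gf 0) / (y - 0)) \<longlongrightarrow> L) (at 0 within {0..<1})"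
  proof (rule tendstoI)
    fix \<epsilon> :: real assume \<epsilon>: "\<epsilon> > 0"
    obtain d where d: "d > 0" and dd: "\<forall>r. 0 < r \<and> r < d \<longrightarrow> \<bar>Gf r / r - L\<bar> < \<epsilon>"
      using key[OF \<epsilon>] by blast
    show "\<forall>\<^sub>F y in at 0 within {0..<1}. dist ((Gf y - Gf 0) / (y - 0)) L < \<epsilon>"
      unfolding eventually_at
    proof (intro exI[of _ d] conjI ballI impI d)
      fix y :: real assume "y \<in> {0..<1}" "y \<noteq> 0 \<and> dist y 0 < d"
      then have "0 < y" "y < d" by auto
      then show "dist ((Gf y - Gf 0) / (y - 0)) L < \<epsilon>" using dd G0 by (simp add: dist_real_def)
    qed
  qed
  have "L = C_const n \<alpha> * (n + 2*\<alpha>) * (Gamma (n/2) * Gamma ((1+q)/2) / (sqrt pi * Gamma ((n+q)/2))) powr (1/q)"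
    unfolding L_def C_def D_def m_def Mq_eq ..
  then show ?thesis using lim unfolding Gf_def has_field_derivative_iff by simp
qed


end
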